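(* Let $r\ge1$ and let $G_r(t,u,v,z)=\sum_w t^{\mathrm{length}(w)}u^{\mathrm{asc}(w)}v^{\mathrm{last}(w)}z^{\mathrm{zeros}(w)}$, summed over all ascent sequences $w=(x_1,\dots,x_n)$ with $n\ge r+1$, $x_1=\dots=x_r=0$ and $x_{r+1}=1$. For $s\ge 1$ put $\delta_s=u-(1-t)^s(u-1)$, $\gamma_s=u-(1-zt)(1-t)^{s-1}(u-1)$, $\bar\delta_s=uv-(1-t)^s(uv-1)$, $\bar\gamma_s=uv-(1-zt)(1-t)^{s-1}(uv-1)$, and $\delta_0=\gamma_0=\bar\delta_0=\bar\gamma_0=1$. Then $$G_r(t,u,v,z)=\frac{t^{r+1}z^ru}{v\delta_1-1}\Big(v(v-1)+t(1-u)(z(v-1)-v)\sum_{s\ge0}\frac{u^s(1-t)^s}{\delta_s\delta_{s+1}\prod_{i=1}^{s+1}\gamma_i}+uv^3t(1-uv)\sum_{s\ge0}\frac{(uv)^s(1-t)^s}{\bar\delta_s\bar\delta_{s+1}\prod_{i=1}^{s+1}\bar\gamma_i}\Big).$$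
   Context: An ascent sequence of length $n$ is a sequence $(x_1,\dots,x_n)$ of nonnegative integers with $x_1=0$ and $x_i\in[0,1+\mathrm{asc}(x_1,\dots,x_{i-1})]$ for $2\le i\le n$, where $\mathrm{asc}(y_1,\dots,y_k)=|\{1\le j<k: y_j<y_{j+1}\}|$. For an ascent sequence $w$: $\mathrm{length}(w)$ is its number of entries, $\mathrm{asc}(w)$ its number of ascents, $\mathrm{last}(w)$ its rightmost entry, and $\mathrm{zeros}(w)$ its number of entries equal to 0. Identities are of formal power series in $t,u,v,z$ over $\mathbb{Q}$; $v\delta_1-1$ has constant term $-1$ and each $\delta_s,\gamma_s,\bar\delta_s,\bar\gamma_s$ has constant term $1$, so all quotients are formal power series, and the $s$-th summands are divisible by $u^s$, so the sums converge formally. *)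

theory Defs
  imports "HOL-Computational_Algebra.Formal_Power_Series"
begin

(* Ascent sequences as lists of naturals; list index 0 corresponds to x_1. *)

definition asc :: "nat list \<Rightarrow> nat" where
  "asc w = card {j. Suc j < length w \<and> w ! j < w ! Suc j}"

definition zeros :: "nat list \<Rightarrow> nat" where
  "zeros w = length (filter (\<lambda>x. x = 0) w)"

definition ascent_seq :: "nat list \<Rightarrow> bool" where
  "ascent_seq w \<longleftrightarrow> w \<noteq> [] \<and> w ! 0 = 0 \<and>
     (\<forall>i. 1 \<le> i \<and> i < length w \<longrightarrow> w ! i \<le> 1 + asc (take i w))"

definition Gseqs :: "nat \<Rightarrow> nat list set" where
  "Gseqs r = {w. ascent_seq w \<and> length w \<ge> r + 1 \<and> (\<forall>i<r. w ! i = 0) \<and> w ! r = 1}"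

(* Formal power series in u,t,v,z over Q, nested: the outermost variable is u,
   then t, then v, and the innermost is z. *)
type_synonym mfps = "rat fps fps fps fps"

definition U :: mfps where "U = fps_X"
definition T :: mfps where "T = fps_const fps_X"
definition V :: mfps where "V = fps_const (fps_const fps_X)"
definition Z :: mfps where "Z = fps_const (fps_const (fps_const fps_X))"

definition G :: "nat \<Rightarrow> mfps" where
  "G r = Abs_fps (\<lambda>a. Abs_fps (\<lambda>n. Abs_fps (\<lambda>l. Abs_fps (\<lambda>k.
      of_nat (card {w \<in> Gseqs r. length w = n \<and> asc w = a \<and> last w = l \<and> zeros w = k})))))"

definition delta :: "nat \<Rightarrow> mfps" where
  "delta s = (if s = 0 then 1 else U - (1 - T) ^ s * (U - 1))"
definition gamma :: "nat \<Rightarrow> mfps" where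
  "gamma s = (if s = 0 then 1 else U - (1 - Z * T) * (1 - T) ^ (s - 1) * (U - 1))"
definition deltabar :: "nat \<Rightarrow> mfps" where
  "deltabar s = (if s = 0 then 1 else U * V - (1 - T) ^ s * (U * V - 1))"
definition gammabar :: "nat \<Rightarrow> mfps" where
  "gammabar s = (if s = 0 then 1 else U * V - (1 - Z * T) * (1 - T) ^ (s - 1) * (U * V - 1))"

end

theory Submission
  imports Defs
begin

unbundle fps_syntax

lemma asc_snoc:
  assumes "w \<noteq> []"
  shows "asc (w @ [x]) = asc w + (if last w < x then 1 else 0)"
proof -
  let ?A = "{j. Suc j < length w \<and> w ! j < w ! Suc j}"
  have eq: "{j. Suc j < length (w @ [x]) \<and> (w @ [x]) ! j < (w @ [x]) ! Suc j}
      = ?A \<union> (if last w < x then {length w - 1} else {})"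
  proof (rule set_eqI)
    fix j
    show "j \<in> {j. Suc j < length (w @ [x]) \<and> (w @ [x]) ! j < (w @ [x]) ! Suc j} \<longleftrightarrow>
        j \<in> ?A \<union> (if last w < x then {length w - 1} else {})"
    proof (cases "Suc j < length w")
      case True then show ?thesis by (auto simp: nth_append)
    next
      case False
      show ?thesis
      proof (cases "j = length w - 1")
        case True
        with assms have "(w @ [x]) ! j = last w" "(w @ [x]) ! Suc j = x"
          by (auto simp: nth_append last_conv_nth)
        with True False assms show ?thesis by auto
      next
        case False2: False
        then have "\<not> Suc j < length (w @ [x])" using False by auto
        with False2 False show ?thesis by auto
      qed
    qed
  qed
  have fin: "finite ?A" by (rule finite_subset[of _ "{..<length w}"]) auto
  show ?thesis
    unfolding asc_def eq using fin by (auto simp: card_insert_if)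
qed

lemma asc_fin: "finite {j. Suc j < length w \<and> w ! j < w ! Suc j}"
  by (rule finite_subset[of _ "{..<length w}"]) auto

lemma asc_take_le: "asc (take i w) \<le> asc w"
  unfolding asc_def
  by (rule card_mono[OF asc_fin]) auto

lemma asc_le_length: "asc w \<le> length w - 1"
proof -
  have "asc w \<le> card {..<length w - 1}"
    unfolding asc_def by (rule card_mono) auto
  thus ?thesis by simp
qed

lemma zeros_snoc: "zeros (w @ [x]) = zeros w + (if x = 0 then 1 else 0)"
  by (simp add: zeros_def)

lemma ascent_seq_snoc:
  assumes "w \<noteq> []"
  shows "ascent_seq (w @ [x]) \<longleftrightarrow> ascent_seq w \<and> x \<le> 1 + asc w"
proof -
  have A: "(\<forall>i. 1 \<le> i \<and> i < length (w @ [x]) \<longrightarrow> (w @ [x]) ! i \<le> 1 + asc (take i (w @ [x])))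
     \<longleftrightarrow> (\<forall>i. 1 \<le> i \<and> i < length w \<longrightarrow> w ! i \<le> 1 + asc (take i w)) \<and> x \<le> 1 + asc w"
  proof
    assume H: "\<forall>i. 1 \<le> i \<and> i < length (w @ [x]) \<longrightarrow> (w @ [x]) ! i \<le> 1 + asc (take i (w @ [x]))"
    show "(\<forall>i. 1 \<le> i \<and> i < length w \<longrightarrow> w ! i \<le> 1 + asc (take i w)) \<and> x \<le> 1 + asc w"
    proof
      show "\<forall>i. 1 \<le> i \<and> i < length w \<longrightarrow> w ! i \<le> 1 + asc (take i w)"
      proof (intro allI impI)
        fix i assume i: "1 \<le> i \<and> i < length w"
        then show "w ! i \<le> 1 + asc (take i w)" using H[rule_format, of i] by (simp add: nth_append)
      qed
      show "x \<le> 1 + asc w" using H[rule_format, of "length w"] assms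
        by (cases w) auto
    qed
  next
    assume H: "(\<forall>i. 1 \<le> i \<and> i < length w \<longrightarrow> w ! i \<le> 1 + asc (take i w)) \<and> x \<le> 1 + asc w"
    show "\<forall>i. 1 \<le> i \<and> i < length (w @ [x]) \<longrightarrow> (w @ [x]) ! i \<le> 1 + asc (take i (w @ [x]))"
    proof (intro allI impI)
      fix i assume i: "1 \<le> i \<and> i < length (w @ [x])"
      then consider "i < length w" | "i = length w" by fastforce
      then show "(w @ [x]) ! i \<le> 1 + asc (take i (w @ [x]))"
      proof cases
        case 1 then show ?thesis using H i by (simp add: nth_append)
      next
        case 2 then show ?thesis using H by (simp add: nth_append)
      qed
    qed
  qed
  show ?thesis unfolding ascent_seq_def using assms A
    by (cases w) (auto simp: nth_append)
qed

lemma ascent_seq_nth_le: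
  assumes "ascent_seq w" "i < length w"
  shows "w ! i \<le> i"
proof (cases "i = 0")
  case True then show ?thesis using assms by (simp add: ascent_seq_def)
next
  case False
  then have "w ! i \<le> 1 + asc (take i w)" using assms unfolding ascent_seq_def by auto
  also have "asc (take i w) \<le> length (take i w) - 1" by (rule asc_le_length)
  finally show ?thesis using False assms by auto
qed

lemma ascent_seq_last_le:
  assumes "ascent_seq w"
  shows "last w \<le> asc w + 1"
proof -
  have ne: "w \<noteq> []" using assms by (simp add: ascent_seq_def)
  show ?thesis
  proof (cases "length w = 1")
    case True
    then have "last w = w ! 0" using ne by (simp add: last_conv_nth)
    then show ?thesis using assms by (simp add: ascent_seq_def)
  next
    case False
    have L: "length w \<noteq> 0" using ne by simp
    have "1 \<le> length w - 1" "length w - 1 < length w" using False L by linarith+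
    then have "w ! (length w - 1) \<le> 1 + asc (take (length w - 1) w)"
      using assms unfolding ascent_seq_def by blast
    also have "\<dots> \<le> 1 + asc w" using asc_take_le by simp
    finally show ?thesis using ne by (simp add: last_conv_nth)
  qed
qed

definition Sn :: "nat \<Rightarrow> nat \<Rightarrow> nat list set" where
  "Sn r n = {w \<in> Gseqs r. length w = n}"

lemma Sn_sub: "Sn r n \<subseteq> {w. set w \<subseteq> {..n} \<and> length w = n}"
proof
  fix w assume "w \<in> Sn r n"
  then have w: "ascent_seq w" "length w = n" by (auto simp: Sn_def Gseqs_def)
  have "set w \<subseteq> {..n}"
  proof
    fix x assume "x \<in> set w"
    then obtain i where "i < length w" "w ! i = x" by (auto simp: in_set_conv_nth)
    then show "x \<in> {..n}" using ascent_seq_nth_le[OF w(1)] w(2) by fastforce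
  qed
  then show "w \<in> {w. set w \<subseteq> {..n} \<and> length w = n}" using w by auto
qed

lemma Sn_finite: "finite (Sn r n)"
  by (rule finite_subset[OF Sn_sub]) (rule finite_lists_length_eq, simp)

lemma Sn_small: "n \<le> r \<Longrightarrow> Sn r n = {}"
  by (auto simp: Sn_def Gseqs_def)

lemma Gseqs_snoc:
  assumes "length w \<ge> r + 1"
  shows "w @ [x] \<in> Gseqs r \<longleftrightarrow> w \<in> Gseqs r \<and> x \<le> 1 + asc w"
proof -
  have ne: "w \<noteq> []" using assms by auto
  have e1: "(\<forall>i<r. (w @ [x]) ! i = 0) \<longleftrightarrow> (\<forall>i<r. w ! i = 0)"
    using assms by (auto simp: nth_append)
  have e2: "(w @ [x]) ! r = w ! r" using assms by (simp add: nth_append)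
  have e3: "length (w @ [x]) \<ge> r + 1" using assms by simp
  show ?thesis
    unfolding Gseqs_def mem_Collect_eq e1 e2 ascent_seq_snoc[OF ne]
    using assms e3 by blast
qed

lemma replicate_asc0: "asc (replicate m (0::nat)) = 0"
proof -
  have E: "{j. Suc j < m \<and> replicate m (0::nat) ! j < replicate m 0 ! Suc j} = {}" by auto
  show ?thesis unfolding asc_def length_replicate E by simp
qed

lemma base_seq:
  assumes "r \<ge> 1"
  shows "replicate r 0 @ [1] \<in> Gseqs r" "asc (replicate r 0 @ [1]) = 1"
    "last (replicate r 0 @ [1]) = 1" "zeros (replicate r 0 @ [1]) = r"
proof -
  have ne: "replicate r (0::nat) \<noteq> []" using assms by simp
  have as: "ascent_seq (replicate r (0::nat))"
    unfolding ascent_seq_def using assms by simp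
  show "asc (replicate r 0 @ [1]) = 1"
    using asc_snoc[OF ne] assms by (simp add: replicate_asc0 last_replicate)
  show "replicate r 0 @ [1] \<in> Gseqs r"
    using ascent_seq_snoc[OF ne, of 1] as
    by (auto simp: Gseqs_def nth_append replicate_asc0)
  show "last (replicate r 0 @ [1]) = 1" by simp
  show "zeros (replicate r 0 @ [1]) = r" by (simp add: zeros_def)
qed

lemma Sn_base:
  assumes "r \<ge> 1"
  shows "Sn r (Suc r) = {replicate r 0 @ [1]}"
proof
  show "{replicate r 0 @ [1]} \<subseteq> Sn r (Suc r)" using base_seq[OF assms] by (simp add: Sn_def)
  show "Sn r (Suc r) \<subseteq> {replicate r 0 @ [1]}"
  proof
    fix w assume "w \<in> Sn r (Suc r)"
    then have w: "length w = Suc r" "\<forall>i<r. w ! i = 0" "w ! r = 1"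
      by (auto simp: Sn_def Gseqs_def)
    have "w = replicate r 0 @ [1]"
    proof (rule nth_equalityI)
      show "length w = length (replicate r 0 @ [1])" using w by simp
      fix i assume i: "i < length w"
      show "w ! i = (replicate r 0 @ [1]) ! i"
      proof (cases "i < r")
        case True then show ?thesis using w by (simp add: nth_append)
      next
        case False
        then have "i = r" using i w by simp
        then show ?thesis using w by (simp add: nth_append)
      qed
    qed
    then show "w \<in> {replicate r 0 @ [1]}" by simp
  qed
qed

definition Ncnt :: "nat \<Rightarrow> nat \<Rightarrow> nat \<Rightarrow> nat \<Rightarrow> nat \<Rightarrow> nat" where
  "Ncnt r a n l k = card {w \<in> Gseqs r. length w = n \<and> asc w = a \<and> last w = l \<and> zeros w = k}"
definition Mcnt :: "nat \<Rightarrow> nat \<Rightarrow> nat \<Rightarrow> nat \<Rightarrow> nat" where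
  "Mcnt r a n k = card {w \<in> Gseqs r. length w = n \<and> asc w = a \<and> zeros w = k}"

definition ind :: "bool \<Rightarrow> rat" where "ind P = (if P then 1 else 0)"

lemma card_filter_ind:
  assumes "finite A"
  shows "of_nat (card {x\<in>A. P x}) = (\<Sum>x\<in>A. ind (P x))"
proof -
  have "card {x\<in>A. P x} = (\<Sum>x\<in>{x\<in>A. P x}. 1)" by simp
  also have "\<dots> = (\<Sum>x\<in>A. if P x then 1 else 0)"
    using assms by (rule sum.inter_filter)
  finally show ?thesis by (simp add: ind_def of_nat_sum if_distrib cong: if_cong)
qed

lemma N_sum: "of_nat (Ncnt r a n l k) = (\<Sum>w\<in>Sn r n. ind (asc w = a \<and> last w = l \<and> zeros w = k))"
proof -
  have "{w \<in> Gseqs r. length w = n \<and> asc w = a \<and> last w = l \<and> zeros w = k}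
      = {w \<in> Sn r n. asc w = a \<and> last w = l \<and> zeros w = k}" by (auto simp: Sn_def)
  then show ?thesis unfolding Ncnt_def using card_filter_ind[OF Sn_finite] by metis
qed

lemma M_sum: "of_nat (Mcnt r a n k) = (\<Sum>w\<in>Sn r n. ind (asc w = a \<and> zeros w = k))"
proof -
  have "{w \<in> Gseqs r. length w = n \<and> asc w = a \<and> zeros w = k}
      = {w \<in> Sn r n. asc w = a \<and> zeros w = k}" by (auto simp: Sn_def)
  then show ?thesis unfolding Mcnt_def using card_filter_ind[OF Sn_finite] by metis
qed

definition Qp :: "nat \<Rightarrow> nat \<Rightarrow> nat \<Rightarrow> nat list \<Rightarrow> bool" where
  "Qp a l k w \<longleftrightarrow> l \<le> 1 + asc w \<and> asc w + (if last w < l then 1 else 0) = a \<and>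
      zeros w + (if l = 0 then 1 else 0) = k"

lemma N_step_set:
  assumes "n \<ge> r + 1"
  shows "{w \<in> Gseqs r. length w = Suc n \<and> asc w = a \<and> last w = l \<and> zeros w = k}
       = (\<lambda>w. w @ [l]) ` {w \<in> Sn r n. Qp a l k w}"
proof
  show "(\<lambda>w. w @ [l]) ` {w \<in> Sn r n. Qp a l k w}
      \<subseteq> {w \<in> Gseqs r. length w = Suc n \<and> asc w = a \<and> last w = l \<and> zeros w = k}"
  proof
    fix v assume "v \<in> (\<lambda>w. w @ [l]) ` {w \<in> Sn r n. Qp a l k w}"
    then obtain w where v: "v = w @ [l]" and w: "w \<in> Gseqs r" "length w = n" "Qp a l k w"
      by (auto simp: Sn_def)
    have ne: "w \<noteq> []" using w(2) assms by auto
    have "v \<in> Gseqs r" using Gseqs_snoc[of r w l] w assms v by (simp add: Qp_def)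
    moreover have "asc v = a" using asc_snoc[OF ne, of l] w(3) v by (simp add: Qp_def)
    moreover have "zeros v = k" using zeros_snoc[of w l] w(3) v by (simp add: Qp_def)
    ultimately show "v \<in> {w \<in> Gseqs r. length w = Suc n \<and> asc w = a \<and> last w = l \<and> zeros w = k}"
      using v w(2) by simp
  qed
next
  show "{w \<in> Gseqs r. length w = Suc n \<and> asc w = a \<and> last w = l \<and> zeros w = k}
      \<subseteq> (\<lambda>w. w @ [l]) ` {w \<in> Sn r n. Qp a l k w}"
  proof
    fix v assume v: "v \<in> {w \<in> Gseqs r. length w = Suc n \<and> asc w = a \<and> last w = l \<and> zeros w = k}"
    then have vne: "v \<noteq> []" by auto
    define w where "w = butlast v"
    have vw: "v = w @ [l]" using vne v unfolding w_def by (metis (mono_tags, lifting) append_butlast_last_id mem_Collect_eq)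
    have lw: "length w = n" using v unfolding w_def by simp
    have ne: "w \<noteq> []" using lw assms by auto
    have g: "w \<in> Gseqs r \<and> l \<le> 1 + asc w" using Gseqs_snoc[of r w l] lw assms v vw by simp
    have "asc w + (if last w < l then 1 else 0) = a" using asc_snoc[OF ne, of l] v vw by simp
    moreover have "zeros w + (if l = 0 then 1 else 0) = k" using zeros_snoc[of w l] v vw by simp
    ultimately have "w \<in> {w \<in> Sn r n. Qp a l k w}" using g lw by (simp add: Sn_def Qp_def)
    then show "v \<in> (\<lambda>w. w @ [l]) ` {w \<in> Sn r n. Qp a l k w}" using vw by blast
  qed
qed

lemma N_Suc:
  assumes r: "r \<ge> 1"
  shows "of_nat (Ncnt r a (Suc n) l k) = ind (n = r \<and> a = 1 \<and> l = 1 \<and> k = r)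
          + (\<Sum>w\<in>Sn r n. ind (Qp a l k w))"
proof (cases "n \<ge> r + 1")
  case True
  have "Ncnt r a (Suc n) l k = card {w \<in> Sn r n. Qp a l k w}"
    unfolding Ncnt_def N_step_set[OF True]
    by (rule card_image) (auto simp: inj_on_def)
  then show ?thesis using True card_filter_ind[OF Sn_finite, of r n "Qp a l k"]
    by (simp add: ind_def)
next
  case False
  then have S: "Sn r n = {}" by (intro Sn_small) simp
  show ?thesis
  proof (cases "n = r")
    case True
    have "{w \<in> Gseqs r. length w = Suc n \<and> asc w = a \<and> last w = l \<and> zeros w = k}
        = {w \<in> Sn r (Suc r). asc w = a \<and> last w = l \<and> zeros w = k}"
      using True by (auto simp: Sn_def)
    also have "\<dots> = (if a = 1 \<and> l = 1 \<and> k = r then {replicate r 0 @ [1]} else {})"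
      unfolding Sn_base[OF r] using base_seq[OF r] by auto
    finally show ?thesis unfolding Ncnt_def using True S by (simp add: ind_def)
  next
    case False2: False
    have E: "{w \<in> Gseqs r. length w = Suc n \<and> asc w = a \<and> last w = l \<and> zeros w = k} = {}"
      using False False2 by (auto simp: Gseqs_def)
    show ?thesis unfolding Ncnt_def E using False2 S by (simp add: ind_def)
  qed
qed

lemma N_zero: "Ncnt r a 0 l k = 0"
  unfolding Ncnt_def by (auto simp: Gseqs_def)

definition c4 :: "mfps \<Rightarrow> nat \<Rightarrow> nat \<Rightarrow> nat \<Rightarrow> nat \<Rightarrow> rat" where
  "c4 F a n l k = F $ a $ n $ l $ k"

lemma c4_U: "c4 (U * F) a n l k = (if a = 0 then 0 else c4 F (a - 1) n l k)"
  by (simp add: c4_def U_def)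
lemma c4_T: "c4 (T * F) a n l k = (if n = 0 then 0 else c4 F a (n - 1) l k)"
  by (simp add: c4_def T_def)
lemma c4_V: "c4 (V * F) a n l k = (if l = 0 then 0 else c4 F a n (l - 1) k)"
  by (simp add: c4_def V_def)
lemma c4_Z: "c4 (Z * F) a n l k = (if k = 0 then 0 else c4 F a n l (k - 1))"
  by (simp add: c4_def Z_def)
lemma c4_Tpow: "c4 (T ^ m * F) a n l k = (if n < m then 0 else c4 F a (n - m) l k)"
  by (simp add: c4_def T_def fps_const_power fps_X_power_mult_nth)
lemma c4_Zpow: "c4 (Z ^ m * F) a n l k = (if k < m then 0 else c4 F a n l (k - m))"
  by (simp add: c4_def Z_def fps_const_power fps_X_power_mult_nth)
lemma c4_add: "c4 (F + H) a n l k = c4 F a n l k + c4 H a n l k"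
  by (simp add: c4_def)
lemma c4_diff: "c4 (F - H) a n l k = c4 F a n l k - c4 H a n l k"
  by (simp add: c4_def)
lemma c4_1: "c4 1 a n l k = (if a = 0 \<and> n = 0 \<and> l = 0 \<and> k = 0 then 1 else 0)"
  by (simp add: c4_def)

definition G1 :: "nat \<Rightarrow> mfps" where
  "G1 r = Abs_fps (\<lambda>a. Abs_fps (\<lambda>n. fps_const (Abs_fps (\<lambda>k. of_nat (Mcnt r a n k)))))"

lemma c4_G: "c4 (G r) a n l k = of_nat (Ncnt r a n l k)"
  by (simp add: c4_def G_def Ncnt_def)

lemma c4_G1: "c4 (G1 r) a n l k = (if l = 0 then of_nat (Mcnt r a n k) else 0)"
  by (simp add: c4_def G1_def)

lemma UV_lin: "U * V = fps_const (fps_const fps_X) * fps_X"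
  by (simp add: U_def V_def mult.commute)

lemma c4_G1UV: "c4 (fps_compose (G1 r) (U * V)) a n l k = (if l = a then of_nat (Mcnt r a n k) else 0)"
  unfolding UV_lin fps_compose_linear
  by (simp add: c4_def G1_def fps_const_power fps_X_power_mult_nth)

lemma c4_ext: "(\<And>a n l k. c4 F a n l k = c4 H a n l k) \<Longrightarrow> F = H"
  unfolding c4_def by (intro fps_ext) blast

definition I0 :: "nat \<Rightarrow> mfps" where "I0 r = T^(r+1)*(Z^r*(U*1))"

lemma ind_TF[simp]: "ind True = 1" "ind False = 0" by (simp_all add: ind_def)

lemma if_ind: "(if c then x else 0) = ind c * x" by (simp add: ind_def)

lemma iU: "c4 (U * F) a n l k = ind (a \<noteq> 0) * c4 F (a - 1) n l k"
  by (simp add: c4_U ind_def)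
lemma iT: "c4 (T * F) a n l k = ind (n \<noteq> 0) * c4 F a (n - 1) l k"
  by (simp add: c4_T ind_def)
lemma iV: "c4 (V * F) a n l k = ind (l \<noteq> 0) * c4 F a n (l - 1) k"
  by (simp add: c4_V ind_def)
lemma iZ: "c4 (Z * F) a n l k = ind (k \<noteq> 0) * c4 F a n l (k - 1)"
  by (simp add: c4_Z ind_def)
lemma iI0: "c4 (I0 r) a n l k = ind (a = 1 \<and> n = r + 1 \<and> l = 0 \<and> k = r)"
  unfolding I0_def c4_Tpow c4_Zpow c4_U c4_1 ind_def by auto
lemma iG1: "c4 (G1 r) a n l k = ind (l = 0) * of_nat (Mcnt r a n k)"
  by (simp add: c4_G1 ind_def)
lemma iG1UV: "c4 (fps_compose (G1 r) (U * V)) a n l k = ind (l = a) * of_nat (Mcnt r a n k)"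
  by (simp add: c4_G1UV ind_def)

lemma LHS_chain: "(V * delta 1 - 1) * X = V*X - V*(T*X) + V*(T*(U*X)) - X"
  unfolding delta_def by (simp add: algebra_simps)

lemma RHS_chain: "(V - 1) * (T^(r+1)*Z^r*U*V) + T*(Z*(V-1) - V) * Y + T*U*V^2*W =
   V*(V*I0 r) - V*I0 r + T*(Z*(V*Y)) - T*(Z*Y) - T*(V*Y) + T*(U*(V*(V*W)))"
  by (simp add: I0_def algebra_simps power2_eq_square)

definition PL :: "nat \<Rightarrow> nat \<Rightarrow> nat \<Rightarrow> nat \<Rightarrow> nat \<Rightarrow> nat \<Rightarrow> rat" where
  "PL a l k al la ze = ind (l \<noteq> 0) * ind (l - 1 \<le> 1 + al \<and> al + (if la < l - 1 then 1 else 0) = a \<and>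
        ze + (if l - 1 = 0 then 1 else 0) = k)
     - ind (l \<noteq> 0) * ind (al = a \<and> la = l - 1 \<and> ze = k)
     + ind (l \<noteq> 0) * (ind (a \<noteq> 0) * ind (al = a - 1 \<and> la = l - 1 \<and> ze = k))
     - ind (l \<le> 1 + al \<and> al + (if la < l then 1 else 0) = a \<and> ze + (if l = 0 then 1 else 0) = k)"

definition PR :: "nat \<Rightarrow> nat \<Rightarrow> nat \<Rightarrow> nat \<Rightarrow> nat \<Rightarrow> nat \<Rightarrow> rat" where
  "PR a l k al la ze = ind (k \<noteq> 0) * (ind (l \<noteq> 0) * (ind (l - 1 = 0) * ind (al = a \<and> ze = k - 1)))
     - ind (k \<noteq> 0) * (ind (l = 0) * ind (al = a \<and> ze = k - 1))
     - ind (l \<noteq> 0) * (ind (l - 1 = 0) * ind (al = a \<and> ze = k))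
     + ind (a \<noteq> 0) * (ind (l \<noteq> 0) * (ind (l - 1 \<noteq> 0) * (ind (l - 1 - 1 = a - 1) * ind (al = a - 1 \<and> ze = k))))"

lemma PL_PR: "la \<le> al + 1 \<Longrightarrow> PL a l k al la ze = PR a l k al la ze"
proof -
  assume h: "la \<le> al + 1"
  consider "l = 0" | "l = 1" | "l \<ge> 2" by linarith
  then show ?thesis
  proof cases
    case 1 then show ?thesis unfolding PL_def PR_def ind_def by (cases k) auto
  next
    case 2 then show ?thesis using h unfolding PL_def PR_def ind_def by (cases a) auto
  next
    case 3
    then obtain l' where l: "l = Suc (Suc l')" by (metis add_2_eq_Suc le_Suc_ex)
    show ?thesis using h unfolding PL_def PR_def ind_def l by (cases a) auto
  qed
qed

lemma E_lhs:
  assumes r: "r \<ge> 1"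
  shows "c4 (V*G r - V*(T*G r) + V*(T*(U*G r)) - G r) a (Suc m) l k =
     ind (l \<noteq> 0) * ind (m = r \<and> a = 1 \<and> l - 1 = 1 \<and> k = r) - ind (m = r \<and> a = 1 \<and> l = 1 \<and> k = r)
     + (\<Sum>w\<in>Sn r m. PL a l k (asc w) (last w) (zeros w))"
  apply (simp only: c4_add c4_diff iU iT iV c4_G N_Suc[OF r] diff_Suc_1)
  apply (simp add: N_sum PL_def Qp_def sum.distrib sum_subtractf sum_distrib_left ring_distribs)
  done

lemma E_rhs:
  "c4 (V*(V*I0 r) - V*I0 r + T*(Z*(V*G1 r)) - T*(Z*G1 r)
     - T*(V*G1 r) + T*(U*(V*(V*(fps_compose (G1 r) (U*V)))))) a (Suc m) l k =
     ind (l \<noteq> 0) * ind (l - 1 \<noteq> 0) * ind (a = 1 \<and> m = r \<and> l - 1 - 1 = 0 \<and> k = r)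
     - ind (l \<noteq> 0) * ind (a = 1 \<and> m = r \<and> l - 1 = 0 \<and> k = r)
     + (\<Sum>w\<in>Sn r m. PR a l k (asc w) (last w) (zeros w))"
  apply (simp only: c4_add c4_diff iU iT iV iZ iI0 iG1 iG1UV diff_Suc_1)
  apply (simp add: M_sum PR_def sum.distrib sum_subtractf sum_distrib_left ring_distribs)
  done

lemma Sn_last_le: "w \<in> Sn r m \<Longrightarrow> last w \<le> asc w + 1"
  by (rule ascent_seq_last_le) (simp add: Sn_def Gseqs_def)

lemma E_coef:
  assumes r: "r \<ge> 1"
  shows "c4 (V*G r - V*(T*G r) + V*(T*(U*G r)) - G r) a n l k =
   c4 (V*(V*I0 r) - V*I0 r + T*(Z*(V*G1 r)) - T*(Z*G1 r)
     - T*(V*G1 r) + T*(U*(V*(V*(fps_compose (G1 r) (U*V)))))) a n l k"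
proof (cases n)
  case 0
  then show ?thesis
    by (simp add: c4_add c4_diff iU iT iV iZ iI0 iG1 iG1UV c4_G N_zero)
next
  case (Suc m)
  have b: "ind (l \<noteq> 0) * ind (m = r \<and> a = 1 \<and> l - 1 = 1 \<and> k = r) - ind (m = r \<and> a = 1 \<and> l = 1 \<and> k = r)
     = ind (l \<noteq> 0) * ind (l - 1 \<noteq> 0) * ind (a = 1 \<and> m = r \<and> l - 1 - 1 = 0 \<and> k = r)
     - ind (l \<noteq> 0) * ind (a = 1 \<and> m = r \<and> l - 1 = 0 \<and> k = r)"
    unfolding ind_def by auto
  have s: "(\<Sum>w\<in>Sn r m. PL a l k (asc w) (last w) (zeros w)) = (\<Sum>w\<in>Sn r m. PR a l k (asc w) (last w) (zeros w))"
    by (rule sum.cong[OF refl]) (rule PL_PR[OF Sn_last_le])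
  show ?thesis unfolding Suc E_lhs[OF r] E_rhs b s ..
qed

lemma E_eq:
  assumes r: "r \<ge> 1"
  shows "(V * delta 1 - 1) * G r = (V - 1) * (T^(r+1)*Z^r*U*V) + T*(Z*(V-1) - V) * G1 r
     + T*U*V^2*(fps_compose (G1 r) (U*V))"
  unfolding LHS_chain RHS_chain by (rule c4_ext, rule E_coef[OF r])

lemma fps_mult_inverse_ring:
  fixes f :: "'a::{ring_1,inverse} fps"
  assumes "f$0 * inverse (f$0) = 1"
  shows "f * inverse f = 1"
  using fps_right_inverse[OF assms] by (simp add: fps_inverse_def)

lemma inv_lvl1: "(f::rat fps)$0 \<noteq> 0 \<Longrightarrow> f * inverse f = 1"
  by (rule inverse_mult_eq_1')

lemma inv_lvl2: "(f::rat fps fps)$0$0 \<noteq> 0 \<Longrightarrow> f * inverse f = 1"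
  by (rule fps_mult_inverse_ring, rule inv_lvl1)

lemma inv_lvl3: "(f::rat fps fps fps)$0$0$0 \<noteq> 0 \<Longrightarrow> f * inverse f = 1"
  by (rule fps_mult_inverse_ring, rule inv_lvl2)

lemma inv_lvl4: "(f::mfps)$0$0$0$0 \<noteq> 0 \<Longrightarrow> f * inverse f = 1"
  by (rule fps_mult_inverse_ring, rule inv_lvl3)

lemma suminf_fps_nth_gen:
  fixes f :: "nat \<Rightarrow> 'a::ab_group_add fps"
  assumes "\<And>s a. a < s \<Longrightarrow> f s $ a = 0"
  shows "suminf f = Abs_fps (\<lambda>a. \<Sum>s\<le>a. f s $ a)"
proof -
  have "f sums Abs_fps (\<lambda>a. \<Sum>s\<le>a. f s $ a)"
    unfolding sums_def
  proof (rule tendsto_fpsI)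
    fix a
    show "\<forall>\<^sub>F n in sequentially. (\<Sum>i<n. f i) $ a = Abs_fps (\<lambda>a. \<Sum>s\<le>a. f s $ a) $ a"
    proof (rule eventually_sequentiallyI[of "Suc a"])
      fix n assume n: "Suc a \<le> n"
      have "(\<Sum>i<n. f i) $ a = (\<Sum>i<n. f i $ a)" by (simp add: fps_sum_nth)
      also have "\<dots> = (\<Sum>i\<le>a. f i $ a)"
      proof (rule sum.mono_neutral_right)
        show "finite {..<n}" by simp
        show "{..a} \<subseteq> {..<n}" using n by auto
        show "\<forall>i\<in>{..<n} - {..a}. f i $ a = 0" using assms by auto
      qed
      finally show "(\<Sum>i<n. f i) $ a = Abs_fps (\<lambda>a. \<Sum>s\<le>a. f s $ a) $ a" by simp
    qed
  qed
  thus ?thesis by (rule sums_unique[symmetric])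
qed

lemma suminf_fps_nth:
  fixes f :: "nat \<Rightarrow> 'a::ab_group_add fps"
  assumes "\<And>s a. a < s \<Longrightarrow> f s $ a = 0"
  shows "suminf f $ a = (\<Sum>s\<le>a. f s $ a)"
  using suminf_fps_nth_gen[OF assms] by simp


definition ev0 :: "mfps \<Rightarrow> rat" where "ev0 F = F$0$0$0$0"

lemma ev0_simps[simp]:
  "ev0 (F * H) = ev0 F * ev0 H" "ev0 (F + H) = ev0 F + ev0 H" "ev0 (F - H) = ev0 F - ev0 H"
  "ev0 1 = 1" "ev0 0 = 0" "ev0 U = 0" "ev0 T = 0" "ev0 V = 0" "ev0 Z = 0" "ev0 (- F) = - ev0 F"
  by (simp_all add: ev0_def U_def T_def V_def Z_def)

lemma ev0_power[simp]: "ev0 (F ^ n) = ev0 F ^ n"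
  by (induction n) simp_all

lemma ev0_prod[simp]: "ev0 (prod f A) = prod (\<lambda>i. ev0 (f i)) A"
  by (induction A rule: infinite_finite_induct) (simp_all add: ev0_def)

lemma ev0_nonzero: "ev0 F \<noteq> 0 \<Longrightarrow> F \<noteq> 0"
  by auto

lemma ev0_inv: "ev0 F \<noteq> 0 \<Longrightarrow> F * inverse F = 1"
  unfolding ev0_def by (rule inv_lvl4)

definition ordge :: "'a::zero fps \<Rightarrow> nat \<Rightarrow> bool" where
  "ordge F m \<longleftrightarrow> (\<forall>b<m. F $ b = 0)"

lemma ordge_Xpow: "ordge (fps_X ^ s * X) s"
  by (simp add: ordge_def fps_X_power_mult_nth)

lemma ordge_mult_right: "ordge Y m \<Longrightarrow> ordge (X * Y :: 'a::comm_ring_1 fps) m"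
  unfolding ordge_def fps_mult_nth by (auto intro!: sum.neutral)

lemma ordge_mult_left: "ordge X m \<Longrightarrow> ordge (X * Y :: 'a::comm_ring_1 fps) m"
  using ordge_mult_right[of X m Y] by (simp add: mult.commute)

lemma ordge_power: "g $ 0 = 0 \<Longrightarrow> ordge (g ^ i :: 'a::comm_ring_1 fps) i"
proof (induction i)
  case 0 then show ?case by (simp add: ordge_def)
next
  case (Suc i)
  show ?case unfolding ordge_def
  proof (intro allI impI)
    fix b assume b: "b < Suc i"
    have "(g ^ Suc i) $ b = (\<Sum>j=0..b. g $ j * (g ^ i) $ (b - j))" by (simp add: fps_mult_nth)
    also have "\<dots> = 0"
    proof (rule sum.neutral, rule ballI)
      fix j assume "j \<in> {0..b}"
      then show "g $ j * (g ^ i) $ (b - j) = 0"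
        using Suc b by (cases "j = 0") (auto simp: ordge_def)
    qed
    finally show "(g ^ Suc i) $ b = 0" .
  qed
qed

lemma ordge_compose:
  assumes "ordge F m" "g $ 0 = 0"
  shows "ordge (fps_compose F (g :: 'a::comm_ring_1 fps)) m"
  unfolding ordge_def
proof (intro allI impI)
  fix b assume b: "b < m"
  show "fps_compose F g $ b = 0" unfolding fps_compose_nth
  proof (rule sum.neutral, rule ballI)
    fix i assume i: "i \<in> {0..b}"
    then have "i < m" using b by auto
    then show "F $ i * (g ^ i) $ b = 0" using assms(1) by (simp add: ordge_def)
  qed
qed

lemma ordge_sums:
  fixes f :: "nat \<Rightarrow> 'a::ab_group_add fps"
  assumes "\<And>s. ordge (f s) s"
  shows "f sums suminf f"
proof -
  have o: "\<And>s a. a < s \<Longrightarrow> f s $ a = 0" using assms by (simp add: ordge_def)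
  have "f sums Abs_fps (\<lambda>a. \<Sum>s\<le>a. f s $ a)"
    unfolding sums_def
  proof (rule tendsto_fpsI)
    fix a
    show "\<forall>\<^sub>F n in sequentially. (\<Sum>i<n. f i) $ a = Abs_fps (\<lambda>a. \<Sum>s\<le>a. f s $ a) $ a"
    proof (rule eventually_sequentiallyI[of "Suc a"])
      fix n assume n: "Suc a \<le> n"
      have "(\<Sum>i<n. f i) $ a = (\<Sum>i<n. f i $ a)" by (simp add: fps_sum_nth)
      also have "\<dots> = (\<Sum>i\<le>a. f i $ a)"
      proof (rule sum.mono_neutral_right)
        show "finite {..<n}" by simp
        show "{..a} \<subseteq> {..<n}" using n by auto
        show "\<forall>i\<in>{..<n} - {..a}. f i $ a = 0" using o by auto
      qed
      finally show "(\<Sum>i<n. f i) $ a = Abs_fps (\<lambda>a. \<Sum>s\<le>a. f s $ a) $ a" by simp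
    qed
  qed
  moreover then have "suminf f = Abs_fps (\<lambda>a. \<Sum>s\<le>a. f s $ a)" by (rule sums_unique[symmetric])
  ultimately show ?thesis by simp
qed

lemma ordge_suminf_nth:
  fixes f :: "nat \<Rightarrow> 'a::ab_group_add fps"
  assumes "\<And>s. ordge (f s) s"
  shows "suminf f $ a = (\<Sum>s\<le>a. f s $ a)"
  by (rule suminf_fps_nth) (use assms in \<open>auto simp: ordge_def\<close>)

lemma sums_local:
  fixes F :: "'a::ab_group_add fps \<Rightarrow> 'b::ab_group_add fps"
  assumes "f sums X"
    and add: "\<And>(A::nat set) g. finite A \<Longrightarrow> F (sum g A) = (\<Sum>i\<in>A. F (g i))"
    and loc: "\<And>x y a. (\<forall>i\<le>a. x $ i = y $ i) \<Longrightarrow> F x $ a = F y $ a"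
  shows "(\<lambda>s. F (f s)) sums F X"
  unfolding sums_def
proof (rule tendsto_fpsI)
  fix a
  have "\<forall>i. \<forall>\<^sub>F n in sequentially. (\<Sum>j<n. f j) $ i = X $ i"
    using assms(1) unfolding sums_def tendsto_fps_iff by blast
  then have "\<forall>\<^sub>F n in sequentially. \<forall>i\<in>{..a}. (\<Sum>j<n. f j) $ i = X $ i"
    by (intro eventually_ball_finite) auto
  then show "\<forall>\<^sub>F n in sequentially. (\<Sum>i<n. F (f i)) $ a = F X $ a"
  proof (rule eventually_mono)
    fix n assume "\<forall>i\<in>{..a}. (\<Sum>j<n. f j) $ i = X $ i"
    then have "F (\<Sum>j<n. f j) $ a = F X $ a" by (intro loc) auto
    then show "(\<Sum>i<n. F (f i)) $ a = F X $ a" using add[of "{..<n}" f] by simp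
  qed
qed

lemma mult_suminf:
  fixes f :: "nat \<Rightarrow> 'a::comm_ring_1 fps"
  assumes "\<And>s. ordge (f s) s"
  shows "c * suminf f = suminf (\<lambda>s. c * f s)"
proof -
  have "(\<lambda>s. c * f s) sums (c * suminf f)"
  proof (rule sums_local[OF ordge_sums[OF assms], where F = "\<lambda>x. c * x"])
    show "\<And>A g. finite A \<Longrightarrow> c * sum g A = (\<Sum>i\<in>A. c * g i)" by (simp add: sum_distrib_left)
    show "(c * x) $ a = (c * y) $ a" if "\<forall>i\<le>a. x $ i = y $ i" for x y :: "'a fps" and a
      unfolding fps_mult_nth using that by (intro sum.cong) auto
  qed
  then show ?thesis by (rule sums_unique)
qed

lemma compose_suminf:
  fixes f :: "nat \<Rightarrow> 'a::comm_ring_1 fps"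
  assumes "\<And>s. ordge (f s) s"
  shows "fps_compose (suminf f) g = suminf (\<lambda>s. fps_compose (f s) g)"
proof -
  have "(\<lambda>s. fps_compose (f s) g) sums (fps_compose (suminf f) g)"
  proof (rule sums_local[OF ordge_sums[OF assms], where F = "\<lambda>x. fps_compose x g"])
    show "\<And>A h. finite A \<Longrightarrow> fps_compose (sum h A) g = (\<Sum>i\<in>A. fps_compose (h i) g)"
      by (simp add: fps_compose_sum_distrib)
    show "fps_compose x g $ a = fps_compose y g $ a" if "\<forall>i\<le>a. x $ i = y $ i" for x y :: "'a fps" and a
      unfolding fps_compose_nth using that by (intro sum.cong) auto
  qed
  then show ?thesis by (rule sums_unique)
qed

lemma suminf_split_head_fps:
  fixes f :: "nat \<Rightarrow> 'a::ab_group_add fps"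
  assumes "\<And>s. ordge (f s) s"
  shows "suminf f = f 0 + suminf (\<lambda>s. f (Suc s))"
proof (rule fps_ext)
  fix a
  have o2: "ordge (f (Suc s)) s" for s
    using assms[of "Suc s"] by (simp add: ordge_def)
  have "suminf f $ a = (\<Sum>s\<le>a. f s $ a)" by (rule ordge_suminf_nth[OF assms])
  also have "\<dots> = f 0 $ a + (\<Sum>s<a. f (Suc s) $ a)"
    by (cases a) (simp, simp only: sum.atMost_Suc_shift lessThan_Suc_atMost)
  also have "(\<Sum>s<a. f (Suc s) $ a) = (\<Sum>s\<le>a. f (Suc s) $ a)"
    using assms[of "Suc a"] by (simp add: ordge_def lessThan_Suc_atMost[symmetric])
  also have "\<dots> = suminf (\<lambda>s. f (Suc s)) $ a" by (rule ordge_suminf_nth[OF o2, symmetric])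
  finally show "suminf f $ a = (f 0 + suminf (\<lambda>s. f (Suc s))) $ a" by simp
qed

definition cv :: "nat \<Rightarrow> mfps \<Rightarrow> mfps" where
  "cv j F = Abs_fps (\<lambda>a. Abs_fps (\<lambda>n. fps_const (F $ a $ n $ j)))"

definition vfree :: "mfps \<Rightarrow> bool" where
  "vfree c \<longleftrightarrow> (\<forall>a n. c $ a $ n = fps_const (c $ a $ n $ 0))"

lemma fps_const_sum: "fps_const (sum f A) = (\<Sum>x\<in>A. fps_const (f x))"
  by (induction A rule: infinite_finite_induct) (simp_all flip: fps_const_add)

lemma cv_add[simp]: "cv j (F + H) = cv j F + cv j H"
  by (rule fps_ext, rule fps_ext) (simp add: cv_def)
lemma cv_diff[simp]: "cv j (F - H) = cv j F - cv j H"
  by (rule fps_ext, rule fps_ext) (simp add: cv_def)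
lemma cv_V: "cv j (V * F) = (if j = 0 then 0 else cv (j - 1) F)"
proof (cases j)
  case 0 then show ?thesis by (intro fps_ext) (simp add: cv_def V_def)
next
  case (Suc i) then show ?thesis by (intro fps_ext) (simp add: cv_def V_def)
qed

lemma vfree_cv: "vfree (cv j F)"
  by (simp add: vfree_def cv_def)

lemma cv_vfree: "vfree X \<Longrightarrow> cv j X = (if j = 0 then X else 0)"
proof -
  assume X: "vfree X"
  have e: "X $ a $ n = fps_const (X $ a $ n $ 0)" for a n using X by (simp add: vfree_def)
  show ?thesis
  proof (cases j)
    case 0
    show ?thesis unfolding 0 by (intro fps_ext) (simp add: cv_def e[symmetric])
  next
    case (Suc i)
    have "X $ a $ n $ Suc i = 0" for a n by (subst e) simp
    then show ?thesis unfolding Suc by (intro fps_ext) (simp add: cv_def)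
  qed
qed

lemma vfree_ex: "vfree c \<Longrightarrow> \<exists>h. \<forall>i p. c $ i $ p = fps_const (h i p)"
  unfolding vfree_def by (rule exI[of _ "\<lambda>i p. c $ i $ p $ 0"])

lemma cv_vfree_mult:
  assumes c: "vfree c"
  shows "cv j (c * F) = c * cv j F"
proof (rule fps_ext, rule fps_ext)
  fix a n
  obtain h where ce: "\<And>i p. c $ i $ p = fps_const (h i p)" using vfree_ex[OF c] by blast
  have "(c * F) $ a $ n $ j = (\<Sum>i=0..a. \<Sum>p=0..n. h i p * F $ (a - i) $ (n - p) $ j)"
    by (simp add: fps_mult_nth[where 'a = "rat fps fps fps"] fps_mult_nth[where 'a = "rat fps fps"] fps_sum_nth ce)
  moreover have "(c * cv j F) $ a $ n =
      fps_const (\<Sum>i=0..a. \<Sum>p=0..n. h i p * F $ (a - i) $ (n - p) $ j)"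
    by (simp add: fps_mult_nth[where 'a = "rat fps fps fps"] fps_mult_nth[where 'a = "rat fps fps"] fps_sum_nth cv_def fps_const_sum ce)
  ultimately show "cv j (c * F) $ a $ n = (c * cv j F) $ a $ n"
    by (simp add: cv_def)
qed

lemma vfree_simps:
  "vfree 1" "vfree 0" "vfree U" "vfree T" "vfree Z"
  by (auto simp: vfree_def U_def T_def Z_def)

lemma vfree_add: "vfree x \<Longrightarrow> vfree y \<Longrightarrow> vfree (x + y)"
proof -
  assume hx: "vfree x" and hy: "vfree y"
  obtain h1 where e1: "\<And>i p. x $ i $ p = fps_const (h1 i p)" using vfree_ex[OF hx] by blast
  obtain h2 where e2: "\<And>i p. y $ i $ p = fps_const (h2 i p)" using vfree_ex[OF hy] by blast
  show ?thesis unfolding vfree_def by (simp add: e1 e2)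
qed
lemma vfree_diff: "vfree x \<Longrightarrow> vfree y \<Longrightarrow> vfree (x - y)"
proof -
  assume hx: "vfree x" and hy: "vfree y"
  obtain h1 where e1: "\<And>i p. x $ i $ p = fps_const (h1 i p)" using vfree_ex[OF hx] by blast
  obtain h2 where e2: "\<And>i p. y $ i $ p = fps_const (h2 i p)" using vfree_ex[OF hy] by blast
  show ?thesis unfolding vfree_def by (simp add: e1 e2)
qed
lemma vfree_mult: "vfree x \<Longrightarrow> vfree y \<Longrightarrow> vfree (x * y)"
proof -
  assume hx: "vfree x" and hy: "vfree y"
  have "x * y = cv 0 (x * y)" using cv_vfree_mult[OF hx, of 0 y] cv_vfree[OF hy, of 0] by simp
  then show ?thesis by (metis vfree_cv)
qed
lemma vfree_power: "vfree x \<Longrightarrow> vfree (x ^ n)"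
  by (induction n) (simp_all add: vfree_simps vfree_mult)

lemma vfree_G1: "vfree (G1 r)"
  by (simp add: vfree_def G1_def)

lemma cv_H: "cv j (fps_compose (G1 r) (U * V)) = fps_X ^ j * fps_const (G1 r $ j)"
proof (rule fps_ext, rule fps_ext)
  fix a n
  show "cv j (fps_compose (G1 r) (U * V)) $ a $ n = (fps_X ^ j * fps_const (G1 r $ j)) $ a $ n"
    unfolding UV_lin fps_compose_linear
    by (simp add: cv_def G1_def fps_const_power fps_X_power_mult_nth)
qed

definition D1 :: mfps where "D1 = 1 - T + T * U"
definition v0 :: mfps where "v0 = inverse D1"
definition phi :: mfps where "phi = U * v0"
definition Ip :: "nat \<Rightarrow> mfps" where "Ip r = T^(r+1) * Z^r * U"

lemma delta1_D1: "delta 1 = D1"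
  by (simp add: delta_def D1_def algebra_simps)

lemma ev0_D1: "ev0 D1 = 1"
  by (simp add: D1_def)

lemma D1v0: "D1 * v0 = 1"
  unfolding v0_def by (rule ev0_inv) (simp add: ev0_D1)

lemma phi0: "phi $ 0 = 0"
  by (simp add: phi_def U_def)

lemma vfree_D1: "vfree D1"
  unfolding D1_def by (intro vfree_diff vfree_add vfree_mult vfree_simps)

lemma vfree_Ip: "vfree (Ip r)"
  unfolding Ip_def by (intro vfree_mult vfree_power vfree_simps)

lemma G_big_last: "l > b + 1 \<Longrightarrow> G r $ b $ n $ l $ k = 0"
proof -
  assume l: "l > b + 1"
  have E: "{w \<in> Gseqs r. length w = n \<and> asc w = b \<and> last w = l \<and> zeros w = k} = {}"
  proof (rule ccontr)
    assume "{w \<in> Gseqs r. length w = n \<and> asc w = b \<and> last w = l \<and> zeros w = k} \<noteq> {}"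
    then obtain w where "w \<in> Gseqs r" "asc w = b" "last w = l" by auto
    then show False using ascent_seq_last_le[of w] l by (auto simp: Gseqs_def)
  qed
  then have "Ncnt r b n l k = 0" unfolding Ncnt_def by (metis card.empty)
  then show ?thesis using c4_G[of r b n l k] by (simp add: c4_def)
qed

lemma ordge_cvG: "ordge (cv J (G r)) (J - 1)"
  unfolding ordge_def
proof (intro allI impI)
  fix b assume "b < J - 1"
  then have "G r $ b $ n $ J = 0" for n by (intro fps_ext) (simp add: G_big_last)
  then show "cv J (G r) $ b = 0" by (intro fps_ext) (simp add: cv_def)
qed

lemma cv_LHS: "cv j ((V * D1 - 1) * X) = (if j = 0 then 0 else D1 * cv (j - 1) X) - cv j X"
proof -
  have "(V * D1 - 1) * X = V * (D1 * X) - X" by (simp add: algebra_simps)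
  then show ?thesis by (simp add: cv_V cv_vfree_mult[OF vfree_D1])
qed

lemma Q_chain: "(V - 1) * (T^(r+1)*Z^r*U*V) + T*(Z*(V-1) - V) * G1 r + T*U*V^2*H =
   V*(V*Ip r) - V*Ip r + V*(T*Z*G1 r) - T*Z*G1 r - V*(T*G1 r) + V*(V*(T*U*H))"
  by (simp add: Ip_def algebra_simps power2_eq_square)

definition QQ :: "nat \<Rightarrow> mfps" where
  "QQ r = (V - 1) * (T^(r+1)*Z^r*U*V) + T*(Z*(V-1) - V) * G1 r + T*U*V^2*(fps_compose (G1 r) (U * V))"

lemma vf1: "vfree (T * Z * G1 r)" "vfree (T * G1 r)" "vfree (T * U)"
  by (intro vfree_mult vfree_simps vfree_G1)+

lemma cvQ:
  "cv j (QQ r) = (if j = 2 then Ip r else 0) - (if j = 1 then Ip r else 0) + (if j = 1 then T*Z*G1 r else 0)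
     - (if j = 0 then T*Z*G1 r else 0) - (if j = 1 then T*G1 r else 0)
     + (if 2 \<le> j then T*U*(fps_X^(j-2) * fps_const (G1 r $ (j-2))) else 0)"
  unfolding QQ_def Q_chain
  by (simp add: cv_V cv_vfree[OF vfree_Ip] cv_vfree[OF vf1(1)] cv_vfree[OF vf1(2)]
        cv_vfree_mult[OF vf1(3)] cv_H numeral_2_eq_2)

lemma cvQ_G:
  assumes r: "r \<ge> 1"
  shows "cv j (QQ r) = (if j = 0 then 0 else D1 * cv (j - 1) (G r)) - cv j (G r)"
proof -
  have "cv j (QQ r) = cv j ((V * delta 1 - 1) * G r)" by (simp only: E_eq[OF r] QQ_def)
  also have "\<dots> = (if j = 0 then 0 else D1 * cv (j - 1) (G r)) - cv j (G r)"
    unfolding delta1_D1 by (rule cv_LHS)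
  finally show ?thesis .
qed

lemma tele:
  assumes r: "r \<ge> 1"
  shows "(\<Sum>j\<le>J. cv j (QQ r) * v0 ^ j) = - (cv J (G r) * v0 ^ J)"
proof (induction J)
  case 0
  show ?case by (simp add: cvQ_G[OF r])
next
  case (Suc J)
  have q: "cv (Suc J) (QQ r) = D1 * cv J (G r) - cv (Suc J) (G r)" by (simp add: cvQ_G[OF r])
  have "(\<Sum>j\<le>Suc J. cv j (QQ r) * v0 ^ j) = - (cv J (G r) * v0 ^ J)
      + (D1 * cv J (G r) - cv (Suc J) (G r)) * v0 ^ Suc J"
    using Suc.IH q by simp
  also have "\<dots> = - (cv J (G r) * v0 ^ J) + cv J (G r) * v0 ^ J * (D1 * v0)
      - cv (Suc J) (G r) * v0 ^ Suc J"
    by (simp add: algebra_simps)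
  also have "\<dots> = - (cv (Suc J) (G r) * v0 ^ Suc J)" by (simp add: D1v0)
  finally show ?case .
qed


lemma phi_pow: "phi ^ i = U ^ i * v0 ^ i"
  by (simp add: phi_def power_mult_distrib)

lemma PS:
  assumes r: "r \<ge> 1"
  shows "(\<Sum>j\<le>m+2. cv j (QQ r) * v0 ^ j) = Ip r * v0^2 - Ip r * v0 + T*Z*G1 r * v0 - T*Z*G1 r
     - T*G1 r * v0 + T*U*v0^2*(\<Sum>i\<le>m. fps_const (G1 r $ i) * phi ^ i)"
proof (induction m)
  case 0
  have s: "(\<Sum>j\<le>2. f j) = f 0 + f 1 + f (2::nat)" for f :: "nat \<Rightarrow> mfps"
    by (simp add: numeral_2_eq_2)
  show ?case unfolding s by (simp add: cvQ algebra_simps power2_eq_square)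
next
  case (Suc m)
  have "(\<Sum>j\<le>Suc m+2. cv j (QQ r) * v0 ^ j) = (\<Sum>j\<le>m+2. cv j (QQ r) * v0 ^ j)
      + cv (m+3) (QQ r) * v0 ^ (m+3)" by (simp add: numeral_3_eq_3)
  also have "cv (m+3) (QQ r) = T*U*(fps_X^(Suc m) * fps_const (G1 r $ Suc m))"
    by (simp add: cvQ)
  also have "(\<Sum>j\<le>m+2. cv j (QQ r) * v0 ^ j) = Ip r * v0^2 - Ip r * v0 + T*Z*G1 r * v0 - T*Z*G1 r
     - T*G1 r * v0 + T*U*v0^2*(\<Sum>i\<le>m. fps_const (G1 r $ i) * phi ^ i)" by (rule Suc.IH)
  finally show ?case
    by (simp add: phi_pow U_def algebra_simps power_add numeral_3_eq_3 power2_eq_square)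
qed


lemma ordge_diffP:
  "ordge (fps_compose F phi - (\<Sum>i\<le>a. fps_const (F $ i) * phi ^ i)) (Suc a)"
  unfolding ordge_def
proof (intro allI impI)
  fix b assume b: "b < Suc a"
  have z: "(phi ^ i) $ b = 0" if "b < i" for i using ordge_power[OF phi0, of i] that by (simp add: ordge_def)
  have "(\<Sum>i\<le>a. fps_const (F $ i) * phi ^ i) $ b = (\<Sum>i\<le>a. F $ i * (phi ^ i) $ b)"
    by (simp add: fps_sum_nth)
  also have "\<dots> = (\<Sum>i=0..b. F $ i * (phi ^ i) $ b)"
  proof (rule sum.mono_neutral_right)
    show "finite {..a}" by simp
    show "{0..b} \<subseteq> {..a}" using b by auto
    show "\<forall>i\<in>{..a} - {0..b}. F $ i * (phi ^ i) $ b = 0" using z by auto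
  qed
  finally show "(fps_compose F phi - (\<Sum>i\<le>a. fps_const (F $ i) * phi ^ i)) $ b = 0"
    by (simp add: fps_compose_nth)
qed

definition Kexp :: "nat \<Rightarrow> mfps" where
  "Kexp r = Ip r * v0^2 - Ip r * v0 + T*Z*G1 r * v0 - T*Z*G1 r - T*G1 r * v0
     + T*U*v0^2*(fps_compose (G1 r) phi)"

lemma Kern:
  assumes r: "r \<ge> 1"
  shows "Kexp r = 0"
proof (rule fps_ext)
  fix a
  define P where "P = (\<Sum>i\<le>a. fps_const (G1 r $ i) * phi ^ i)"
  have "Kexp r = (\<Sum>j\<le>a+2. cv j (QQ r) * v0 ^ j) + T*U*v0^2*(fps_compose (G1 r) phi - P)"
    unfolding PS[OF r] Kexp_def P_def by (simp add: algebra_simps)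
  also have "\<dots> = - (cv (a+2) (G r) * v0 ^ (a+2)) + T*U*v0^2*(fps_compose (G1 r) phi - P)"
    by (simp only: tele[OF r])
  finally have K: "Kexp r = - (cv (a+2) (G r) * v0 ^ (a+2)) + T*U*v0^2*(fps_compose (G1 r) phi - P)" .
  have o1: "ordge (cv (a+2) (G r) * v0 ^ (a+2)) (a + 1)"
    using ordge_mult_left[OF ordge_cvG[of "a+2" r]] by simp
  have o2: "ordge (T*U*v0^2*(fps_compose (G1 r) phi - P)) (Suc a)"
    unfolding P_def by (rule ordge_mult_right[OF ordge_diffP])
  show "Kexp r $ a = 0 $ a" unfolding K using o1 o2 by (simp add: ordge_def)
qed

definition Gm1 :: mfps where "Gm1 = 1 - Z * T + Z * T * U"

lemma gamma1_Gm1: "gamma 1 = Gm1"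
  by (simp add: gamma_def Gm1_def algebra_simps)

lemma T_nz: "T \<noteq> 0"
  by (simp add: T_def)

lemma Kern2:
  assumes r: "r \<ge> 1"
  shows "D1 * Gm1 * G1 r = Ip r * (1 - U) + U * fps_compose (G1 r) phi"
proof -
  define K where "K = fps_compose (G1 r) phi"
  have "D1^2 * Kexp r = Ip r * (D1*v0)^2 - Ip r * D1 * (D1*v0) + T*Z*G1 r*D1*(D1*v0) - T*Z*G1 r*D1^2
      - T*G1 r*D1*(D1*v0) + T*U*(D1*v0)^2*K"
    unfolding Kexp_def K_def by (simp add: algebra_simps power2_eq_square)
  also have "\<dots> = Ip r - Ip r * D1 + T*Z*G1 r*D1 - T*Z*G1 r*D1^2 - T*G1 r*D1 + T*U*K"
    by (simp add: D1v0)
  also have "\<dots> = T * (Ip r * (1 - U) - D1 * Gm1 * G1 r + U * K)"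
    by (simp add: Ip_def D1_def Gm1_def algebra_simps power2_eq_square)
  finally have "T * (Ip r * (1 - U) - D1 * Gm1 * G1 r + U * K) = 0"
    using Kern[OF r] by simp
  then have "Ip r * (1 - U) - D1 * Gm1 * G1 r + U * K = 0" using T_nz by simp
  then show ?thesis unfolding K_def by (simp add: algebra_simps)
qed

definition Ds :: "nat \<Rightarrow> mfps" where
  "Ds s = delta s * delta (s + 1) * (\<Prod>i=1..s+1. gamma i)"
definition Ss :: "nat \<Rightarrow> mfps" where
  "Ss s = U ^ s * (1 - T) ^ s * inverse (Ds s)"

lemma ev0_delta[simp]: "ev0 (delta s) = 1"
  by (simp add: delta_def)
lemma ev0_gamma[simp]: "ev0 (gamma s) = 1"
  by (simp add: gamma_def)
lemma ev0_Ds: "ev0 (Ds s) = 1"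
  by (simp add: Ds_def)

lemma Ds_inv: "Ds s * inverse (Ds s) = 1"
  by (rule ev0_inv) (simp add: ev0_Ds)

lemma Ds_nz: "Ds s \<noteq> 0"
  using ev0_Ds[of s] by auto

lemma ordge_Ss: "ordge (Ss s) s"
  unfolding Ss_def U_def mult.assoc by (rule ordge_Xpow)

lemma cU: "U oo phi = phi" by (simp add: U_def phi0)
lemma cT: "T oo phi = T" by (simp add: T_def)
lemma cZ: "Z oo phi = Z" by (simp add: Z_def)

lemmas cdist = fps_compose_add_distrib fps_compose_sub_distrib fps_compose_mult_distrib[OF phi0]
  fps_compose_power[OF phi0, symmetric] fps_compose_prod_distrib[OF phi0]

lemma phiD1: "phi * D1 = U"
  by (simp add: phi_def mult.assoc mult.commute[of v0] D1v0)

lemma delta_phi: "(delta s oo phi) * D1 = delta (s + 1)"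
proof (cases "s = 0")
  case True then show ?thesis by (simp add: delta1_D1 delta_def D1_def algebra_simps)
next
  case False
  have "(delta s oo phi) * D1 = (phi - (1 - T)^s * (phi - 1)) * D1"
    using False by (simp add: delta_def cdist cU cT)
  also have "\<dots> = phi * D1 - (1 - T)^s * (phi * D1 - D1)" by (simp add: algebra_simps)
  also have "\<dots> = U - (1 - T)^s * (U - D1)" by (simp add: phiD1)
  also have "\<dots> = delta (s + 1)" by (simp add: delta_def D1_def algebra_simps)
  finally show ?thesis .
qed

lemma gamma_phi: "s \<ge> 1 \<Longrightarrow> (gamma s oo phi) * D1 = gamma (s + 1)"
proof -
  assume s: "s \<ge> 1"
  have "(gamma s oo phi) * D1 = (phi - (1 - Z*T) * (1 - T)^(s-1) * (phi - 1)) * D1"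
    using s by (simp add: gamma_def cdist cU cT cZ)
  also have "\<dots> = phi * D1 - (1 - Z*T) * (1 - T)^(s-1) * (phi * D1 - D1)" by (simp add: algebra_simps)
  also have "\<dots> = U - (1 - Z*T) * (1 - T)^(s-1) * (U - D1)" by (simp add: phiD1)
  also have "\<dots> = U - (1 - Z*T) * (1 - T)^s * (U - 1)"
  proof -
    obtain t where t: "s = Suc t" using s by (cases s) auto
    show ?thesis unfolding t by (simp add: D1_def algebra_simps)
  qed
  also have "\<dots> = gamma (s + 1)" by (simp add: gamma_def)
  finally show ?thesis .
qed

lemma gprod_phi: "(\<Prod>i=1..n. (gamma i oo phi)) * D1 ^ n = (\<Prod>i=2..n+1. gamma i)"
proof (induction n)
  case 0 then show ?case by simp
next
  case (Suc n)
  have "(\<Prod>i=1..Suc n. (gamma i oo phi)) * D1 ^ Suc n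
      = ((\<Prod>i=1..n. (gamma i oo phi)) * D1 ^ n) * ((gamma (Suc n) oo phi) * D1)"
    by (simp add: prod.cl_ivl_Suc algebra_simps)
  also have "\<dots> = (\<Prod>i=2..n+1. gamma i) * gamma (Suc n + 1)"
    using Suc.IH gamma_phi[of "Suc n"] by simp
  also have "\<dots> = (\<Prod>i=2..Suc n+1. gamma i)" by (simp add: prod.cl_ivl_Suc)
  finally show ?case .
qed

lemma Ds_phi: "Ds (s + 1) = (Ds s oo phi) * (D1 * D1 * D1 ^ (s + 1)) * Gm1"
proof -
  have p: "(\<Prod>i=1..s+1+1. gamma i) = gamma 1 * (\<Prod>i=2..s+1+1. gamma i)"
    by (simp add: prod.atLeast_Suc_atMost numeral_2_eq_2)
  have "(Ds s oo phi) * (D1 * D1 * D1 ^ (s + 1)) * Gm1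
     = ((delta s oo phi) * D1) * ((delta (s+1) oo phi) * D1)
       * ((\<Prod>i=1..s+1. (gamma i oo phi)) * D1 ^ (s + 1)) * Gm1"
    by (simp add: Ds_def cdist algebra_simps)
  also have "\<dots> = delta (s + 1) * delta (s + 1 + 1) * (\<Prod>i=2..s+1+1. gamma i) * gamma 1"
    by (simp only: delta_phi gprod_phi gamma1_Gm1)
  also have "\<dots> = Ds (s + 1)"
    unfolding Ds_def p by (simp only: ac_simps)
  finally show ?thesis by simp
qed


definition SS :: mfps where "SS = suminf Ss"
definition A :: "nat \<Rightarrow> mfps" where "A r = Ip r * (1 - U) * SS"

lemma ordge_Ss_phi: "ordge (Ss s oo phi) s"
  by (rule ordge_compose[OF ordge_Ss phi0])

lemma PT: "U * ((Ip r * (1 - U)) oo phi) * (Ss s oo phi) = D1 * Gm1 * (Ip r * (1 - U)) * Ss (s + 1)"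
proof -
  define E where "E = Ds s oo phi"
  define w where "w = inverse (Ds s) oo phi"
  have Ew: "E * w = 1"
  proof -
    have "E * w = (Ds s * inverse (Ds s)) oo phi" unfolding E_def w_def by (simp add: cdist)
    then show ?thesis by (simp add: Ds_inv)
  qed
  have e1: "(Ip r * (1 - U)) oo phi = T^(r+1) * Z^r * phi * (1 - phi)"
    by (simp add: Ip_def cdist cU cT cZ)
  have e2: "Ss s oo phi = phi^s * (1 - T)^s * w"
    by (simp add: Ss_def cdist cU cT w_def)
  have pD: "phi^(s+1) * D1^(s+1) = U^(s+1)"
    by (metis power_mult_distrib phiD1)
  have oD: "(1 - phi) * D1 = (1 - U) * (1 - T)"
  proof -
    have "(1 - phi) * D1 = D1 - phi * D1" by (simp add: algebra_simps)
    also have "\<dots> = D1 - U" by (simp only: phiD1)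
    finally show ?thesis by (simp add: D1_def algebra_simps)
  qed
  have L: "U * ((Ip r * (1 - U)) oo phi) * (Ss s oo phi) * Ds (s + 1)
      = U * (T^(r+1) * Z^r) * (phi^(s+1) * D1^(s+1)) * ((1 - phi) * D1) * (1 - T)^s * D1 * Gm1 * (E * w)"
    unfolding e1 e2 Ds_phi E_def[symmetric] by (simp add: algebra_simps)
  also have "\<dots> = U * (T^(r+1) * Z^r) * U^(s+1) * ((1 - U) * (1 - T)) * (1 - T)^s * D1 * Gm1"
    by (simp only: pD oD Ew mult_1_right)
  finally have L': "U * ((Ip r * (1 - U)) oo phi) * (Ss s oo phi) * Ds (s + 1)
      = U * (T^(r+1) * Z^r) * U^(s+1) * ((1 - U) * (1 - T)) * (1 - T)^s * D1 * Gm1" .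
  have R: "D1 * Gm1 * (Ip r * (1 - U)) * Ss (s + 1) * Ds (s + 1)
      = D1 * Gm1 * (Ip r * (1 - U)) * U^(s+1) * (1 - T)^(s+1) * (Ds (s + 1) * inverse (Ds (s + 1)))"
    by (simp add: Ss_def algebra_simps)
  have "U * ((Ip r * (1 - U)) oo phi) * (Ss s oo phi) * Ds (s + 1) = D1 * Gm1 * (Ip r * (1 - U)) * Ss (s + 1) * Ds (s + 1)"
    unfolding L' R Ds_inv by (simp add: Ip_def algebra_simps)
  then show ?thesis using Ds_nz[of "s+1"] by simp
qed

lemma Ds0: "Ds 0 = D1 * Gm1"
proof -
  have "Ds 0 = delta 0 * delta 1 * gamma 1" by (simp add: Ds_def)
  also have "\<dots> = D1 * Gm1" by (simp only: delta1_D1 gamma1_Gm1) (simp add: delta_def)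
  finally show ?thesis .
qed

lemma Aeq: "D1 * Gm1 * A r = Ip r * (1 - U) + U * (A r oo phi)"
proof -
  have os1: "ordge (Ss (Suc s)) s" for s using ordge_Ss[of "Suc s"] by (simp add: ordge_def)
  have "U * (A r oo phi) = U * ((Ip r * (1 - U)) oo phi) * (SS oo phi)"
    unfolding A_def by (simp add: cdist mult.assoc)
  also have "SS oo phi = suminf (\<lambda>s. Ss s oo phi)" unfolding SS_def by (rule compose_suminf[OF ordge_Ss])
  also have "U * ((Ip r * (1 - U)) oo phi) * suminf (\<lambda>s. Ss s oo phi)
      = suminf (\<lambda>s. U * ((Ip r * (1 - U)) oo phi) * (Ss s oo phi))"
    by (rule mult_suminf[OF ordge_Ss_phi])
  also have "\<dots> = suminf (\<lambda>s. D1 * Gm1 * (Ip r * (1 - U)) * Ss (Suc s))"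
    using PT by simp
  also have "\<dots> = D1 * Gm1 * (Ip r * (1 - U)) * suminf (\<lambda>s. Ss (Suc s))"
    by (rule mult_suminf[OF os1, symmetric])
  finally have UA: "U * (A r oo phi) = D1 * Gm1 * (Ip r * (1 - U)) * suminf (\<lambda>s. Ss (Suc s))" .
  have "D1 * Gm1 * A r = D1 * Gm1 * (Ip r * (1 - U)) * (Ss 0 + suminf (\<lambda>s. Ss (Suc s)))"
    unfolding A_def SS_def suminf_split_head_fps[OF ordge_Ss] by (simp add: algebra_simps)
  also have "\<dots> = Ip r * (1 - U) * (Ds 0 * inverse (Ds 0)) + D1 * Gm1 * (Ip r * (1 - U)) * suminf (\<lambda>s. Ss (Suc s))"
    by (simp add: Ss_def Ds0 algebra_simps)
  also have "\<dots> = Ip r * (1 - U) + U * (A r oo phi)" by (simp add: Ds_inv UA)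
  finally show ?thesis .
qed

lemma ev0_D1Gm1: "(D1 * Gm1) $ 0 \<noteq> 0"
proof
  assume h0: "(D1 * Gm1) $ 0 = 0"
  have "ev0 (D1 * Gm1) = 0" unfolding ev0_def h0 by simp
  moreover have "ev0 (D1 * Gm1) = 1" by (simp add: D1_def Gm1_def)
  ultimately show False by (metis zero_neq_one)
qed

lemma uniq:
  assumes h: "D1 * Gm1 * X = U * (X oo phi)"
  shows "X = 0"
proof -
  have "X $ a = 0" for a
  proof (induction a rule: less_induct)
    case (less a)
    have "(D1 * Gm1 * X) $ a = (D1 * Gm1) $ 0 * X $ a + (\<Sum>i=1..a. (D1 * Gm1) $ i * X $ (a - i))"
      by (simp add: fps_mult_nth sum.atLeast_Suc_atMost)
    also have "(\<Sum>i=1..a. (D1 * Gm1) $ i * X $ (a - i)) = 0"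
      by (rule sum.neutral) (use less in auto)
    finally have l: "(D1 * Gm1 * X) $ a = (D1 * Gm1) $ 0 * X $ a" by simp
    have "(U * (X oo phi)) $ a = 0"
    proof (cases a)
      case 0 then show ?thesis by (simp add: U_def)
    next
      case (Suc b)
      have "(X oo phi) $ b = 0" unfolding fps_compose_nth
        by (rule sum.neutral) (use less Suc in auto)
      then show ?thesis using Suc by (simp add: U_def)
    qed
    then have "(D1 * Gm1) $ 0 * X $ a = 0" using l h by simp
    then show ?case using ev0_D1Gm1 by simp
  qed
  then show ?thesis by (intro fps_ext) simp
qed

lemma G1_eq_A:
  assumes r: "r \<ge> 1"
  shows "G1 r = A r"
proof -
  have "D1 * Gm1 * (G1 r - A r) = D1 * Gm1 * G1 r - D1 * Gm1 * A r" by (simp add: algebra_simps)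
  also have "\<dots> = U * (G1 r oo phi) - U * (A r oo phi)" using Kern2[OF r] Aeq[of r] by simp
  also have "\<dots> = U * ((G1 r - A r) oo phi)" by (simp add: fps_compose_sub_distrib algebra_simps)
  finally have "D1 * Gm1 * (G1 r - A r) = U * ((G1 r - A r) oo phi)" .
  then have "G1 r - A r = 0" by (rule uniq)
  then show ?thesis by simp
qed

definition psi :: mfps where "psi = U * V"
definition Dbar :: "nat \<Rightarrow> mfps" where
  "Dbar s = deltabar s * deltabar (s + 1) * (\<Prod>i=1..s+1. gammabar i)"
definition Sbar :: "nat \<Rightarrow> mfps" where
  "Sbar s = (U * V) ^ s * (1 - T) ^ s * inverse (Dbar s)"
definition SSbar :: mfps where "SSbar = suminf Sbar"

lemma psi0: "psi $ 0 = 0" by (simp add: psi_def U_def)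

lemmas pdist = fps_compose_add_distrib fps_compose_sub_distrib fps_compose_mult_distrib[OF psi0]
  fps_compose_power[OF psi0, symmetric] fps_compose_prod_distrib[OF psi0]

lemma pU: "U oo psi = U * V" unfolding U_def using psi0 by (simp add: psi_def U_def)
lemma pT: "T oo psi = T" by (simp add: T_def)
lemma pZ: "Z oo psi = Z" by (simp add: Z_def)
lemma pV: "V oo psi = V" by (simp add: V_def)

lemma delta_psi: "delta s oo psi = deltabar s"
  by (cases "s = 0") (simp_all add: delta_def deltabar_def pdist pU pT)
lemma gamma_psi: "gamma s oo psi = gammabar s"
  by (cases "s = 0") (simp_all add: gamma_def gammabar_def pdist pU pT pZ)

lemma Ds_psi: "Ds s oo psi = Dbar s"
  by (simp add: Ds_def Dbar_def pdist delta_psi gamma_psi)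

lemma ev0_deltabar[simp]: "ev0 (deltabar s) = 1" by (simp add: deltabar_def)
lemma ev0_gammabar[simp]: "ev0 (gammabar s) = 1" by (simp add: gammabar_def)

lemma Dbar_inv: "Dbar s * inverse (Dbar s) = 1"
  by (rule ev0_inv) (simp add: Dbar_def)

lemma inv_unique: "(x::'a::comm_ring_1) * y = 1 \<Longrightarrow> x * z = 1 \<Longrightarrow> y = z"
  by (metis mult.assoc mult.commute mult_1_right)

lemma invDs_psi: "inverse (Ds s) oo psi = inverse (Dbar s)"
proof -
  have "Dbar s * (inverse (Ds s) oo psi) = (Ds s * inverse (Ds s)) oo psi"
    by (simp add: pdist Ds_psi)
  then have "Dbar s * (inverse (Ds s) oo psi) = 1" by (simp add: Ds_inv)
  then show ?thesis using Dbar_inv inv_unique by blast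
qed

lemma Ss_psi: "Ss s oo psi = Sbar s"
  by (simp add: Ss_def Sbar_def pdist pU pT invDs_psi)

lemma SS_psi: "SS oo psi = SSbar"
  unfolding SS_def SSbar_def compose_suminf[OF ordge_Ss] Ss_psi ..

lemma A_psi: "A r oo psi = Ip r * V * (1 - U * V) * SSbar"
  by (simp add: A_def Ip_def pdist pU pT pZ SS_psi algebra_simps)

lemma G_main:
  assumes r: "r \<ge> 1"
  shows "(V * delta 1 - 1) * G r = Ip r * (V * (V - 1) + T * (1 - U) * (Z * (V - 1) - V) * SS
     + U * V ^ 3 * T * (1 - U * V) * SSbar)"
proof -
  have "(V * delta 1 - 1) * G r = (V - 1) * (T^(r+1)*Z^r*U*V) + T*(Z*(V-1) - V) * A r
     + T*U*V^2*(A r oo psi)"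
    using E_eq[OF r] G1_eq_A[OF r] by (simp add: psi_def)
  also have "\<dots> = Ip r * (V * (V - 1) + T * (1 - U) * (Z * (V - 1) - V) * SS
     + U * V ^ 3 * T * (1 - U * V) * SSbar)"
    unfolding A_psi by (simp add: A_def Ip_def algebra_simps power2_eq_square power3_eq_cube)
  finally show ?thesis .
qed

lemma kern_inv: "(V * delta 1 - 1) * inverse (V * delta 1 - 1) = 1"
  by (rule ev0_inv) (simp add: delta1_D1 D1_def)

theorem theorem3:
  fixes r :: nat
  assumes "r \<ge> 1"
  shows "G r = T ^ (r + 1) * Z ^ r * U * inverse (V * delta 1 - 1) *
    (V * (V - 1)
     + T * (1 - U) * (Z * (V - 1) - V) *
         (\<Sum>s. U ^ s * (1 - T) ^ s *
            inverse (delta s * delta (s + 1) * (\<Prod>i=1..s+1. gamma i)))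
     + U * V ^ 3 * T * (1 - U * V) *
         (\<Sum>s. (U * V) ^ s * (1 - T) ^ s *
            inverse (deltabar s * deltabar (s + 1) * (\<Prod>i=1..s+1. gammabar i))))"
proof -
  have e1: "(\<Sum>s. U ^ s * (1 - T) ^ s * inverse (delta s * delta (s + 1) * (\<Prod>i=1..s+1. gamma i))) = SS"
    unfolding SS_def Ss_def Ds_def ..
  have e2: "(\<Sum>s. (U * V) ^ s * (1 - T) ^ s *
            inverse (deltabar s * deltabar (s + 1) * (\<Prod>i=1..s+1. gammabar i))) = SSbar"
    unfolding SSbar_def Sbar_def Dbar_def ..
  define K where "K = V * delta 1 - 1"
  define W where "W = V * (V - 1) + T * (1 - U) * (Z * (V - 1) - V) * SS
     + U * V ^ 3 * T * (1 - U * V) * SSbar"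
  have m: "K * G r = Ip r * W" unfolding K_def W_def by (rule G_main[OF assms])
  have "G r = inverse K * (K * G r)"
    using kern_inv unfolding K_def by (simp add: mult.assoc[symmetric] mult.commute[of "inverse _"])
  also have "\<dots> = T ^ (r + 1) * Z ^ r * U * inverse K * W" unfolding m Ip_def by (simp add: algebra_simps)
  finally show ?thesis unfolding e1 e2 K_def W_def .
qed

end
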